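(* Let $q\ge2$, $t,b\ge1$ and $n\ge bt+1$. Then \[ d_{q,b}(n,t)=\sum_{i=0}^{q-1}d_{q,b}(n-ib-1,t-i). \]
   Context: $\Sigma_q=\{0,\ldots,q-1\}$. A $b$-burst-deletion at position $i\in[1,n-b+1]$ transforms $x_1\cdots x_n$ into $x_1\cdots x_{i-1}x_{i+b}\cdots x_n$. For $n\ge tb+1$, $t\ge0$, $\mathcal{D}_{t,b}(\boldsymbol{x})$ is the set of all length-$(n-tb)$ sequences obtainable from $\boldsymbol{x}$ by $t$ successive $b$-burst-deletions ($\mathcal{D}_{0,b}(\boldsymbol{x})=\{\boldsymbol{x}\}$). The $b$-cyclic sequence $\boldsymbol{X}^{\sigma}_{m,q,b}=X_1\cdots X_m$ has $X_i\equiv\sigma+\lfloor (i-1)/b\rfloor\pmod q$. For $m\ge bs+1$, $s\ge0$, $d_{q,b}(m,s):=|\mathcal{D}_{s,b}(\boldsymbol{X}^0_{m,q,b})|$; $d_{q,b}(m,s)=1$ if $m=bs\ge0$, and $d_{q,b}(m,s)=0$ if $m<bs$ or $s<0$. *)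

theory Defs
  imports Main
begin

text \<open>A b-burst-deletion at (0-indexed) position i,
  with i + b \<le> length x, removes the b consecutive entries x!i, ..., x!(i+b-1).
  (Paper position i corresponds to 0-indexed position i-1.)\<close>

definition burst_del :: "nat \<Rightarrow> nat \<Rightarrow> 'a list \<Rightarrow> 'a list" where
  "burst_del b i x = take i x @ drop (i + b) x"

fun Dtb :: "nat \<Rightarrow> nat \<Rightarrow> 'a list \<Rightarrow> 'a list set" where
  "Dtb 0 b x = {x}"
| "Dtb (Suc t) b x = (\<Union>y\<in>Dtb t b x. {burst_del b i y | i. i + b \<le> length y})"

text \<open>The b-cyclic sequence X^sigma_{m,q,b}: entry number k (1-indexed) is
  (sigma + floor((k-1)/b)) mod q.\<close>
definition cyc_seq :: "nat \<Rightarrow> nat \<Rightarrow> nat \<Rightarrow> nat \<Rightarrow> nat list" where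
  "cyc_seq sigma m q b = map (\<lambda>k. (sigma + k div b) mod q) [0..<m]"

text \<open>d_{q,b}(m,s), with integer arguments to accommodate the boundary conventions.\<close>
definition dqb :: "nat \<Rightarrow> nat \<Rightarrow> int \<Rightarrow> int \<Rightarrow> nat" where
  "dqb q b m s =
     (if s < 0 then 0
      else if m < int b * s then 0
      else if m = int b * s then 1
      else card (Dtb (nat s) b (cyc_seq 0 (nat m) q b)))"

end

theory Submission
  imports Defs
begin

inductive R :: "nat \<Rightarrow> nat \<Rightarrow> 'a list \<Rightarrow> 'a list \<Rightarrow> bool" for b where
  Rnil: "R b 0 [] []"
| Rcons: "R b s x y \<Longrightarrow> R b s (a#x) (a#y)"
| Rdel: "R b s x y \<Longrightarrow> length d = b \<Longrightarrow> R b (Suc s) (d@x) y"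

lemma R_len: "R b s x y \<Longrightarrow> length x = length y + s*b"
  by (induction rule: R.induct) auto

lemma R_set: "R b s x y \<Longrightarrow> set y \<subseteq> set x"
  by (induction rule: R.induct) auto

lemma R_app: "R b s1 x1 y1 \<Longrightarrow> R b s2 x2 y2 \<Longrightarrow> R b (s1+s2) (x1@x2) (y1@y2)"
proof (induction rule: R.induct)
  case Rnil then show ?case by simp
next
  case (Rcons s x y a) then show ?case using R.Rcons by fastforce
next
  case (Rdel s x y d) then show ?case using R.Rdel[of b "s+s2" "x@x2" "y@y2" d] by simp
qed

lemma R_refl: "R b 0 x x"
  by (induction x) (auto intro: R.intros)

lemma R_blocks: "length x = k*b \<Longrightarrow> R b k x []"
proof (induction k arbitrary: x)
  case 0 then show ?case by (auto intro: R.intros)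
next
  case (Suc k)
  have "R b k (drop b x) []" using Suc by simp
  then have "R b (Suc k) (take b x @ drop b x) []"
    using Suc.prems by (intro R.Rdel) auto
  then show ?case by simp
qed

lemma R_split: "R b s x w \<Longrightarrow> w = u@v \<Longrightarrow>
   \<exists>x1 x2 s1 s2. x = x1@x2 \<and> s = s1+s2 \<and> R b s1 x1 u \<and> R b s2 x2 v"
proof (induction arbitrary: u rule: R.induct)
  case Rnil then show ?case by (auto intro: R.intros)
next
  case (Rcons s x y a)
  show ?case
  proof (cases u)
    case Nil
    then show ?thesis using Rcons R.Rcons[OF Rcons.hyps] 
      by (intro exI[of _ "[]"] exI[of _ "a#x"] exI[of _ 0] exI[of _ s]) (auto intro: R.intros)
  next
    case (Cons a' u')
    with Rcons.prems have "y = u'@v" "a' = a" by auto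
    from Rcons.IH[OF this(1)] obtain x1 x2 s1 s2 where
      "x = x1@x2" "s = s1+s2" "R b s1 x1 u'" "R b s2 x2 v" by blast
    then show ?thesis using Cons \<open>a' = a\<close>
      by (intro exI[of _ "a#x1"] exI[of _ x2] exI[of _ s1] exI[of _ s2]) (auto intro: R.intros)
  qed
next
  case (Rdel s x y d)
  from Rdel.IH[OF Rdel.prems] obtain x1 x2 s1 s2 where
      "x = x1@x2" "s = s1+s2" "R b s1 x1 u" "R b s2 x2 v" by blast
  then show ?case using Rdel.hyps
    by (intro exI[of _ "d@x1"] exI[of _ x2] exI[of _ "Suc s1"] exI[of _ s2]) (auto intro: R.intros)
qed

lemma R_burst: assumes "R b s x y" "i + b \<le> length y"
  shows "R b (Suc s) x (burst_del b i y)"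
proof -
  have y: "y = take i y @ (take b (drop i y) @ drop (i+b) y)"
    by (metis append_take_drop_id drop_drop add.commute)
  from R_split[OF assms(1) y] obtain x1 x2 s1 s2 where
    1: "x = x1@x2" "s = s1+s2" "R b s1 x1 (take i y)" "R b s2 x2 (take b (drop i y) @ drop (i+b) y)"
    by blast
  from R_split[OF 1(4) refl] obtain x3 x4 s3 s4 where
    2: "x2 = x3@x4" "s2 = s3+s4" "R b s3 x3 (take b (drop i y))" "R b s4 x4 (drop (i+b) y)"
    by blast
  have "length x3 = b + s3*b" using R_len[OF 2(3)] assms(2) by simp
  then have "R b (Suc s3) x3 []" by (intro R_blocks) simp
  from R_app[OF this 2(4)] have "R b (Suc s3 + s4) x2 (drop (i+b) y)" using 2 by simp
  from R_app[OF 1(3) this] show ?thesis using 1 2 by (simp add: burst_del_def)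
qed

lemma Dtb_SucI: "y \<in> Dtb s b x \<Longrightarrow> i + b \<le> length y \<Longrightarrow> burst_del b i y \<in> Dtb (Suc s) b x"
  by auto

lemma Dtb_SucE: "z \<in> Dtb (Suc s) b x \<Longrightarrow> (\<And>y i. y \<in> Dtb s b x \<Longrightarrow> i + b \<le> length y \<Longrightarrow> z = burst_del b i y \<Longrightarrow> P) \<Longrightarrow> P"
  by auto

lemma Dtb_R: "y \<in> Dtb s b x \<Longrightarrow> R b s x y"
proof (induction s arbitrary: y)
  case 0 then show ?case by (simp add: R_refl)
next
  case (Suc s)
  from Suc.prems obtain y' i where "y' \<in> Dtb s b x" "i + b \<le> length y'" "y = burst_del b i y'"
    by (rule Dtb_SucE)
  then show ?case using Suc.IH R_burst by blast
qed

lemma Dtb_cons: "z \<in> Dtb s b x \<Longrightarrow> a#z \<in> Dtb s b (a#x)"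
proof (induction s arbitrary: z)
  case 0 then show ?case by simp
next
  case (Suc s)
  from Suc.prems obtain y i where y: "y \<in> Dtb s b x" "i + b \<le> length y" "z = burst_del b i y"
    by (rule Dtb_SucE)
  have e: "a # burst_del b i y = burst_del b (Suc i) (a#y)" by (simp add: burst_del_def)
  have "a#y \<in> Dtb s b (a#x)" using Suc.IH y(1) .
  moreover have "Suc i + b \<le> length (a#y)" using y(2) by simp
  ultimately have "burst_del b (Suc i) (a#y) \<in> Dtb (Suc s) b (a#x)" by (rule Dtb_SucI)
  then show ?case using e y(3) by simp
qed

lemma Dtb_del: "y \<in> Dtb s b x \<Longrightarrow> length d = b \<Longrightarrow> y \<in> Dtb (Suc s) b (d@x)"
proof (induction s arbitrary: y)
  case 0
  then have e: "y = burst_del b 0 (d@x)" by (simp add: burst_del_def)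
  have "d@x \<in> Dtb 0 b (d@x)" by simp
  moreover have "0 + b \<le> length (d@x)" using 0 by simp
  ultimately have "burst_del b 0 (d@x) \<in> Dtb (Suc 0) b (d@x)" by (rule Dtb_SucI)
  then show ?case using e by simp
next
  case (Suc s)
  from Suc.prems(1) obtain y' i where y: "y' \<in> Dtb s b x" "i + b \<le> length y'" "y = burst_del b i y'"
    by (rule Dtb_SucE)
  have "y' \<in> Dtb (Suc s) b (d@x)" using Suc.IH y(1) Suc.prems(2) by blast
  from Dtb_SucI[OF this y(2)] show ?case using y(3) by simp
qed

lemma R_Dtb: "R b s x y \<Longrightarrow> y \<in> Dtb s b x"
proof (induction rule: R.induct)
  case Rnil then show ?case by simp
next
  case (Rcons s x y a) show ?case using Rcons.IH by (rule Dtb_cons)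
next
  case (Rdel s x y d) show ?case using Rdel.IH Rdel.hyps(2) by (rule Dtb_del)
qed

lemma Dtb_eq: "Dtb s b x = {y. R b s x y}"
  using Dtb_R R_Dtb by blast

lemma R_hd: "R b s x w \<Longrightarrow> w = a#z \<Longrightarrow>
  \<exists>j. j \<le> s \<and> j*b < length x \<and> x!(j*b) = a \<and> R b (s-j) (drop (j*b+1) x) z"
proof (induction rule: R.induct)
  case Rnil then show ?case by simp
next
  case (Rcons s x y a') then show ?case by (intro exI[of _ 0]) auto
next
  case (Rdel s x y d)
  then obtain j where j: "j \<le> s" "j*b < length x" "x!(j*b) = a" "R b (s-j) (drop (j*b+1) x) z"
    by blast
  have "(d@x)!((Suc j)*b) = x!(j*b)" using Rdel.hyps(2) by (simp add: nth_append add.commute)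
  moreover have "drop (Suc j*b+1) (d@x) = drop (j*b+1) x" using Rdel.hyps(2) by (simp add: add.commute)
  ultimately show ?case using j Rdel.hyps(2) by (intro exI[of _ "Suc j"]) auto
qed

lemma R_hd_conv: assumes "j \<le> s" "j*b < length x" "R b (s-j) (drop (j*b+1) x) z"
  shows "R b s x (x!(j*b) # z)"
proof -
  have x: "x = take (j*b) x @ (x!(j*b) # drop (j*b+1) x)"
    using assms(2) by (metis Cons_nth_drop_Suc Suc_eq_plus1 append_take_drop_id)
  have "R b j (take (j*b) x) []" using assms(2) by (intro R_blocks) simp
  from R_app[OF this R.Rcons[OF assms(3)]] have "R b (j + (s-j)) x (x!(j*b) # z)"
    using x by (metis append_Nil)
  then show ?thesis using assms(1) by simp
qed

definition wseq :: "nat \<Rightarrow> nat \<Rightarrow> nat \<Rightarrow> nat \<Rightarrow> nat \<Rightarrow> nat list" where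
  "wseq q b c p m = map (\<lambda>k. (c + (k+p) div b) mod q) [0..<m]"

lemma wseq_len[simp]: "length (wseq q b c p m) = m"
  by (simp add: wseq_def)

lemma wseq_nth: "k < m \<Longrightarrow> wseq q b c p m ! k = (c + (k+p) div b) mod q"
  by (simp add: wseq_def)

lemma wseq_drop: "drop n (wseq q b c p m) = wseq q b c (p+n) (m-n)"
  by (rule nth_equalityI) (auto simp: wseq_nth algebra_simps)

definition Dset :: "nat \<Rightarrow> nat \<Rightarrow> 'a list \<Rightarrow> 'a list set" where
  "Dset b s x = {y. R b s x y}"

lemma Dset_finite: "finite (Dset b s x)"
proof -
  have "Dset b s x \<subseteq> {ys. set ys \<subseteq> set x \<and> length ys \<le> length x}"
    unfolding Dset_def using R_set R_len by fastforce
  then show ?thesis using finite_lists_length_le[of "set x" "length x"] finite_subset by blast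
qed

lemma Dset_less: "length x < s*b \<Longrightarrow> Dset b s x = {}"
  unfolding Dset_def using R_len by fastforce

lemma Dset_eq: "length x = s*b \<Longrightarrow> Dset b s x = {[]}"
  unfolding Dset_def using R_len R_blocks by fastforce

lemma L1: "(c + (j mod q + k)) mod q = (c + (j + k)) mod (q::nat)"
proof -
  have "(j mod q + (c + k)) mod q = (j + (c+k)) mod q" by (rule mod_add_left_eq)
  then show ?thesis by (simp add: ac_simps)
qed
lemma L2: assumes "i < q" "j < q" "(i + K) mod q = (j + K) mod (q::nat)" shows "i = j"
proof -
  have A: "x = y" if "y \<le> x" "x < q" "(x + K) mod q = (y + K) mod q" for x y
  proof -
    have "q dvd (x + K) - (y + K)" using that by (subst mod_eq_dvd_iff_nat[symmetric]) auto
    then have "q dvd x - y" by simp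
    moreover have "x - y < q" using that by simp
    ultimately have "x - y = 0" using dvd_imp_le by (metis dvd_0_right gr0I leD)
    then show ?thesis using that by simp
  qed
  show ?thesis using A[of j i] A[of i j] assms by (cases "j \<le> i") auto
qed

lemma head_eq:
  assumes "0 < b" "i = j mod q"
  shows "(c + (i*b+p) div b) mod (q::nat) = (c + (j*b+p) div b) mod q"
proof -
  have 1: "(i*b+p) div b = i + p div b" "(j*b+p) div b = j + p div b" using assms(1) by simp_all
  have "(c + (j mod q + p div b)) mod q = (c + (j + p div b)) mod q"
    by (rule L1)
  then show ?thesis using 1 assms(2) by simp
qed

lemma head_inj:
  assumes "0 < b" "i < q" "j < q"
    "(c + (i*b+p) div b) mod (q::nat) = (c + (j*b+p) div b) mod q"
  shows "i = j"
proof -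
  have 1: "(i*b+p) div b = i + p div b" "(j*b+p) div b = j + p div b" using assms(1) by simp_all
  have "(i + (c + p div b)) mod q = (j + (c + p div b)) mod q" using assms(4) 1 by (simp add: ac_simps)
  then show ?thesis using L2 assms(2,3) by blast
qed

lemma decomp:
  assumes b: "0 < b" and q: "0 < q" and x: "x = wseq q b c p m" and sm: "s*b < m"
  shows "Dset b s x = (\<Union>i\<in>{i. i<q \<and> i\<le>s \<and> i*b<m}. Cons (x!(i*b)) ` Dset b (s-i) (drop (i*b+1) x))"
proof
  show "Dset b s x \<subseteq> (\<Union>i\<in>{i. i<q \<and> i\<le>s \<and> i*b<m}. Cons (x!(i*b)) ` Dset b (s-i) (drop (i*b+1) x))"
  proof
    fix y assume "y \<in> Dset b s x"
    then have Ry: "R b s x y" by (simp add: Dset_def)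
    have "length y > 0" using R_len[OF Ry] x sm by simp
    then obtain a z where yz: "y = a#z" by (cases y) auto
    from R_hd[OF Ry yz] obtain j where j: "j \<le> s" "j*b < length x" "x!(j*b) = a"
      "R b (s-j) (drop (j*b+1) x) z" by blast
    define i where "i = j mod q"
    have ij: "i \<le> j" "i < q" using q by (auto simp: i_def)
    have ibjb: "i*b \<le> j*b" using ij by simp
    have jm: "j*b < m" using j(2) x by simp
    have im: "i*b < m" using jm ibjb by linarith
    have hd: "x!(i*b) = a" using j(3) x head_eq[OF b i_def, of c p] wseq_nth[OF im] wseq_nth[OF jm] by simp
    have dd: "drop (i*b+1) x = take ((j-i)*b) (drop (i*b+1) x) @ drop (j*b+1) x"
    proof -
      have "(j-i)*b + (i*b+1) = j*b+1" using ij by (simp add: diff_mult_distrib)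
      then show ?thesis by (metis append_take_drop_id drop_drop)
    qed
    have "R b (j-i) (take ((j-i)*b) (drop (i*b+1) x)) []"
      using j(2) ibjb by (intro R_blocks) (simp add: diff_mult_distrib)
    from R_app[OF this j(4)] have "R b ((j-i) + (s-j)) (drop (i*b+1) x) z" using dd by simp
    then have "R b (s-i) (drop (i*b+1) x) z" using ij j(1) by simp
    then show "y \<in> (\<Union>i\<in>{i. i<q \<and> i\<le>s \<and> i*b<m}. Cons (x!(i*b)) ` Dset b (s-i) (drop (i*b+1) x))"
    proof -
      have "y \<in> Cons (x!(i*b)) ` Dset b (s-i) (drop (i*b+1) x)"
        using hd yz \<open>R b (s-i) (drop (i*b+1) x) z\<close> by (auto simp: Dset_def)
      moreover have "i \<in> {i. i<q \<and> i\<le>s \<and> i*b<m}" using ij j(1) im by simp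
      ultimately show ?thesis by blast
    qed
  qed
next
  show "(\<Union>i\<in>{i. i<q \<and> i\<le>s \<and> i*b<m}. Cons (x!(i*b)) ` Dset b (s-i) (drop (i*b+1) x)) \<subseteq> Dset b s x"
  proof (rule subsetI)
    fix y assume "y \<in> (\<Union>i\<in>{i. i<q \<and> i\<le>s \<and> i*b<m}. Cons (x!(i*b)) ` Dset b (s-i) (drop (i*b+1) x))"
    then obtain i z where i: "i<q" "i\<le>s" "i*b<m" "y = x!(i*b) # z" "R b (s-i) (drop (i*b+1) x) z"
      by (auto simp: Dset_def)
    have "R b s x (x!(i*b) # z)" using i x by (intro R_hd_conv) auto
    then show "y \<in> Dset b s x" using i by (simp add: Dset_def)
  qed
qed

lemma card_decomp:
  assumes b: "0 < b" and q: "0 < q" and sm: "s*b < m"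
  shows "card (Dset b s (wseq q b c p m)) =
     (\<Sum>i\<in>{i. i<q \<and> i\<le>s \<and> i*b<m}. card (Dset b (s-i) (wseq q b c (p+(i*b+1)) (m-(i*b+1)))))"
proof -
  let ?x = "wseq q b c p m"
  let ?I = "{i. i<q \<and> i\<le>s \<and> i*b<m}"
  have fin: "finite ?I" by simp
  have "card (Dset b s ?x) = card (\<Union>i\<in>?I. Cons (?x!(i*b)) ` Dset b (s-i) (drop (i*b+1) ?x))"
    using decomp[OF b q refl sm] by simp
  also have "\<dots> = (\<Sum>i\<in>?I. card (Cons (?x!(i*b)) ` Dset b (s-i) (drop (i*b+1) ?x)))"
  proof (rule card_UN_disjoint[OF fin])
    show "\<forall>i\<in>?I. finite (Cons (?x!(i*b)) ` Dset b (s-i) (drop (i*b+1) ?x))"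
      by (simp add: Dset_finite)
    show "\<forall>i\<in>?I. \<forall>j\<in>?I. i \<noteq> j \<longrightarrow>
      Cons (?x!(i*b)) ` Dset b (s-i) (drop (i*b+1) ?x) \<inter> Cons (?x!(j*b)) ` Dset b (s-j) (drop (j*b+1) ?x) = {}"
    proof (intro ballI impI)
      fix i j assume i: "i \<in> ?I" and j: "j \<in> ?I" and ne: "i \<noteq> j"
      have "?x!(i*b) \<noteq> ?x!(j*b)"
        using i j ne head_inj[OF b, of i q j c p] by (auto simp add: wseq_nth)
      then show "Cons (?x!(i*b)) ` Dset b (s-i) (drop (i*b+1) ?x) \<inter> Cons (?x!(j*b)) ` Dset b (s-j) (drop (j*b+1) ?x) = {}"
        by blast
    qed
  qed
  also have "\<dots> = (\<Sum>i\<in>?I. card (Dset b (s-i) (wseq q b c (p+(i*b+1)) (m-(i*b+1)))))"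
    by (intro sum.cong refl) (simp add: card_image wseq_drop)
  finally show ?thesis .
qed

lemma card_indep:
  assumes b: "0 < b" and q: "0 < q"
  shows "card (Dset b s (wseq q b c p m)) = card (Dset b s (wseq q b 0 0 m))"
proof (induction m arbitrary: s c p rule: less_induct)
  case (less m)
  consider "m < s*b" | "m = s*b" | "s*b < m" by linarith
  then show ?case
  proof cases
    case 1 then show ?thesis by (simp add: Dset_less)
  next
    case 2 then show ?thesis by (simp add: Dset_eq)
  next
    case 3
    have "card (Dset b s (wseq q b c p m)) = (\<Sum>i\<in>{i. i<q \<and> i\<le>s \<and> i*b<m}. card (Dset b (s-i) (wseq q b c (p+(i*b+1)) (m-(i*b+1)))))"
      by (rule card_decomp[OF b q 3])
    also have "\<dots> = (\<Sum>i\<in>{i. i<q \<and> i\<le>s \<and> i*b<m}. card (Dset b (s-i) (wseq q b 0 (0+(i*b+1)) (m-(i*b+1)))))"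
    proof (rule sum.cong[OF refl])
      fix i assume "i \<in> {i. i<q \<and> i\<le>s \<and> i*b<m}"
      then have lt: "m-(i*b+1) < m" by auto
      show "card (Dset b (s-i) (wseq q b c (p+(i*b+1)) (m-(i*b+1)))) = card (Dset b (s-i) (wseq q b 0 (0+(i*b+1)) (m-(i*b+1))))"
        using less.IH[OF lt, of "s-i" c "p+(i*b+1)"] less.IH[OF lt, of "s-i" 0 "0+(i*b+1)"] by simp
    qed
    also have "\<dots> = card (Dset b s (wseq q b 0 0 m))"
      by (rule card_decomp[OF b q 3, symmetric])
    finally show ?thesis .
  qed
qed

lemma dqb_card:
  assumes "0 < b"
  shows "dqb q b (int m) (int s) = card (Dset b s (wseq q b 0 0 m))"
proof -
  have cs: "cyc_seq 0 m q b = wseq q b 0 0 m" by (simp add: cyc_seq_def wseq_def)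
  consider "m < s*b" | "m = s*b" | "s*b < m" by linarith
  then show ?thesis
  proof cases
    case 1
    then have "m < b * s" by (simp add: mult.commute)
    then have "int m < int (b * s)" by (simp only: of_nat_less_iff)
    then have "int m < int b * int s" by (simp only: of_nat_mult)
    then show ?thesis using 1 by (simp add: dqb_def Dset_less)
  next
    case 2
    then have "int m = int b * int s" by simp
    then show ?thesis using 2 by (simp add: dqb_def Dset_eq)
  next
    case 3
    then have "b * s < m" by (simp add: mult.commute)
    then have "int (b * s) < int m" by (simp only: of_nat_less_iff)
    then have "int b * int s < int m" by (simp only: of_nat_mult)
    then have h1: "\<not> int m < int b * int s" and h2: "int m \<noteq> int b * int s" by simp_all
    have h0: "\<not> int s < 0" by simp
    have "dqb q b (int m) (int s) = card (Dtb (nat (int s)) b (cyc_seq 0 (nat (int m)) q b))"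
      unfolding dqb_def if_not_P[OF h0] if_not_P[OF h1] if_not_P[OF h2] ..
    also have "\<dots> = card (Dset b s (wseq q b 0 0 m))"
      unfolding nat_int cs Dtb_eq Dset_def ..
    finally show ?thesis .
  qed
qed

theorem lemma4p8:
  fixes q b t n :: nat
  assumes "q \<ge> 2" and "t \<ge> 1" and "b \<ge> 1" and "n \<ge> b * t + 1"
  shows "dqb q b (int n) (int t) =
           (\<Sum>i = 0..q - 1. dqb q b (int n - int i * int b - 1) (int t - int i))"
proof -
  have b: "0 < b" and q: "0 < q" using assms by auto
  have sm: "t*b < n" using assms(4) by (simp add: mult.commute)
  let ?I = "{i. i<q \<and> i\<le>t \<and> i*b<n}"
  have "dqb q b (int n) (int t) = card (Dset b t (wseq q b 0 0 n))" by (rule dqb_card[OF b])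
  also have "\<dots> = (\<Sum>i\<in>?I. card (Dset b (t-i) (wseq q b 0 (0+(i*b+1)) (n-(i*b+1)))))"
    by (rule card_decomp[OF b q sm])
  also have "\<dots> = (\<Sum>i\<in>?I. dqb q b (int n - int i * int b - 1) (int t - int i))"
  proof (intro sum.cong refl)
    fix i assume i: "i \<in> ?I"
    have le1: "i*b+1 \<le> n" and le2: "i \<le> t" using i by simp_all
    have e1: "int n - int i * int b - 1 = int (n - (i*b+1))"
      unfolding of_nat_diff[OF le1] by simp
    have e2: "int t - int i = int (t - i)" unfolding of_nat_diff[OF le2] ..
    show "card (Dset b (t-i) (wseq q b 0 (0+(i*b+1)) (n-(i*b+1)))) = dqb q b (int n - int i * int b - 1) (int t - int i)"
      unfolding e1 e2 dqb_card[OF b] by (rule card_indep[OF b q])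
  qed
  also have "\<dots> = (\<Sum>i = 0..q - 1. dqb q b (int n - int i * int b - 1) (int t - int i))"
  proof (rule sum.mono_neutral_left)
    show "finite {0..q-1}" by simp
    show "?I \<subseteq> {0..q-1}" using q by (auto simp: atLeastAtMost_iff)
    show "\<forall>i\<in>{0..q - 1} - ?I. dqb q b (int n - int i * int b - 1) (int t - int i) = 0"
    proof
      fix i assume i: "i \<in> {0..q - 1} - ?I"
      then have "i < q" using q by auto
      show "dqb q b (int n - int i * int b - 1) (int t - int i) = 0"
      proof (cases "i \<le> t")
        case False then show ?thesis by (simp add: dqb_def)
      next
        case True
        then have "n \<le> i*b" using i \<open>i < q\<close> by auto
        then have "int n \<le> int (i * b)" by (simp only: of_nat_le_iff)
        then have "int n \<le> int i * int b" by (simp only: of_nat_mult)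
        then have "int n - int i * int b - 1 < 0" by simp
        moreover have "int b * (int t - int i) \<ge> 0" using True by simp
        ultimately show ?thesis by (simp add: dqb_def)
      qed
    qed
  qed
  finally show ?thesis .
qed

end
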